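(* Let $\Gamma=(G,\sigma)$ be a signed graph with girth $g$ and let $C_g^\sigma$ be a shortest cycle of $\Gamma$. If $i_-(\Gamma)=i_-(C_g^\sigma)$, then $N_r(C_g^\sigma)=\emptyset$ for every integer $r\ge 2$.
   Context: A signed graph $\Gamma=(G,\sigma)$ is a simple graph $G$ with a sign function $\sigma:E(G)\to\{+,-\}$. Its adjacency matrix $A(\Gamma)$ has $(u,v)$-entry $\sigma(uv)$ if $uv\in E(G)$ and $0$ otherwise; $i_+(\Gamma)$, $i_-(\Gamma)$, $\eta(\Gamma)$ denote the numbers of positive, negative and zero eigenvalues of $A(\Gamma)$. A cycle $C_g^\sigma$ of $\Gamma$ is regarded as a signed graph with the restricted signs. The girth $g$ is the length of a shortest cycle. For a cycle $C$ of $\Gamma$ and a positive integer $r$, $N_r(C)$ denotes the set of vertices $v\in V(\Gamma)\setminus V(C)$ whose distance to $V(C)$ (the minimum over $x\in V(C)$ of the length of a shortest $v$–$x$ path) equals $r$. *)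

theory Defs
  imports "Jordan_Normal_Form.Char_Poly"
begin

(* A signed graph: finite vertex set V (of naturals), symmetric irreflexive
   edge relation E on V, sign sigma u v (True = +, False = -), symmetric. *)
definition signed_graph :: "nat set \<Rightarrow> (nat \<Rightarrow> nat \<Rightarrow> bool) \<Rightarrow> (nat \<Rightarrow> nat \<Rightarrow> bool) \<Rightarrow> bool" where
  "signed_graph V E \<sigma> \<longleftrightarrow> finite V
     \<and> (\<forall>u v. E u v \<longrightarrow> u \<in> V \<and> v \<in> V)
     \<and> (\<forall>u v. E u v \<longrightarrow> E v u)
     \<and> (\<forall>u. \<not> E u u)
     \<and> (\<forall>u v. E u v \<longrightarrow> \<sigma> u v = \<sigma> v u)"

definition adj_mat :: "nat set \<Rightarrow> (nat \<Rightarrow> nat \<Rightarrow> bool) \<Rightarrow> (nat \<Rightarrow> nat \<Rightarrow> bool) \<Rightarrow> real mat" where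
  "adj_mat V E \<sigma> = mat (card V) (card V) (\<lambda>(i, j).
     let u = sorted_list_of_set V ! i; v = sorted_list_of_set V ! j in
     if E u v then (if \<sigma> u v then 1 else -1) else 0)"

definition neg_index :: "real mat \<Rightarrow> nat" where
  "neg_index A = (\<Sum>x\<in>{x. x < 0 \<and> poly (char_poly A) x = 0}. order x (char_poly A))"

definition i_minus :: "nat set \<Rightarrow> (nat \<Rightarrow> nat \<Rightarrow> bool) \<Rightarrow> (nat \<Rightarrow> nat \<Rightarrow> bool) \<Rightarrow> nat" where
  "i_minus V E \<sigma> = neg_index (adj_mat V E \<sigma>)"

definition is_cycle :: "(nat \<Rightarrow> nat \<Rightarrow> bool) \<Rightarrow> nat list \<Rightarrow> bool" where
  "is_cycle E cs \<longleftrightarrow> length cs \<ge> 3 \<and> distinct cs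
     \<and> (\<forall>i < length cs. E (cs ! i) (cs ! ((i + 1) mod length cs)))"

definition cycle_edge :: "nat list \<Rightarrow> nat \<Rightarrow> nat \<Rightarrow> bool" where
  "cycle_edge cs u v \<longleftrightarrow> (\<exists>i < length cs.
     (u = cs ! i \<and> v = cs ! ((i + 1) mod length cs)) \<or>
     (v = cs ! i \<and> u = cs ! ((i + 1) mod length cs)))"

(* a shortest cycle: its length is the girth *)
definition shortest_cycle :: "(nat \<Rightarrow> nat \<Rightarrow> bool) \<Rightarrow> nat list \<Rightarrow> bool" where
  "shortest_cycle E cs \<longleftrightarrow> is_cycle E cs \<and> (\<forall>ds. is_cycle E ds \<longrightarrow> length cs \<le> length ds)"

definition walk :: "(nat \<Rightarrow> nat \<Rightarrow> bool) \<Rightarrow> nat list \<Rightarrow> bool" where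
  "walk E xs \<longleftrightarrow> xs \<noteq> [] \<and> (\<forall>i. Suc i < length xs \<longrightarrow> E (xs ! i) (xs ! Suc i))"

(* v reaches the set S by a walk with exactly k edges *)
definition reach_in :: "(nat \<Rightarrow> nat \<Rightarrow> bool) \<Rightarrow> nat \<Rightarrow> nat \<Rightarrow> nat set \<Rightarrow> bool" where
  "reach_in E k v S \<longleftrightarrow> (\<exists>xs. walk E xs \<and> length xs = Suc k \<and> hd xs = v \<and> last xs \<in> S)"

definition dist_to_set_eq :: "(nat \<Rightarrow> nat \<Rightarrow> bool) \<Rightarrow> nat \<Rightarrow> nat set \<Rightarrow> nat \<Rightarrow> bool" where
  "dist_to_set_eq E v S r \<longleftrightarrow> reach_in E r v S \<and> (\<forall>k < r. \<not> reach_in E k v S)"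

definition N_r :: "nat set \<Rightarrow> (nat \<Rightarrow> nat \<Rightarrow> bool) \<Rightarrow> nat list \<Rightarrow> nat \<Rightarrow> nat set" where
  "N_r V E cs r = {v \<in> V - set cs. dist_to_set_eq E v (set cs) r}"

end

theory Submission
  imports Defs "Jordan_Normal_Form.Schur_Decomposition"
begin

lemma real_sym_eigen:
  fixes A :: "real mat"
  assumes A: "A \<in> carrier_mat n n" and n: "n > 0" and sym: "\<And>i j. i < n \<Longrightarrow> j < n \<Longrightarrow> A $$ (i,j) = A $$ (j,i)"
  shows "\<exists>\<mu> v. v \<in> carrier_vec n \<and> v \<noteq> 0\<^sub>v n \<and> A *\<^sub>v v = \<mu> \<cdot>\<^sub>v v"
proof -
  define Ac where "Ac = map_mat complex_of_real A"
  have Ac: "Ac \<in> carrier_mat n n" using A by (simp add: Ac_def)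
  have "degree (char_poly Ac) = n" using degree_monic_char_poly[OF Ac] by simp
  hence "\<not> constant (poly (char_poly Ac))" using n by (simp add: constant_degree)
  then obtain z where "poly (char_poly Ac) z = 0" using fundamental_theorem_of_algebra by blast
  hence "eigenvalue Ac z" using eigenvalue_root_char_poly[OF Ac] by simp
  then obtain vc where ev: "eigenvector Ac vc z" unfolding eigenvalue_def by blast
  have vc: "vc \<in> carrier_vec n" and vc0: "vc \<noteq> 0\<^sub>v n" and evq: "Ac *\<^sub>v vc = z \<cdot>\<^sub>v vc"
    using ev Ac unfolding eigenvector_def by auto
  have entry: "(\<Sum>j<n. complex_of_real (A $$ (i,j)) * vc $ j) = z * vc $ i" if i: "i < n" for i
  proof -
    have "(Ac *\<^sub>v vc) $ i = (z \<cdot>\<^sub>v vc) $ i" using evq by simp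
    thus ?thesis using i A vc unfolding Ac_def
      by (auto simp: scalar_prod_def atLeast0LessThan)
  qed
  define s where "s = (\<Sum>i<n. cnj (vc $ i) * (\<Sum>j<n. complex_of_real (A $$ (i,j)) * vc $ j))"
  define N where "N = (\<Sum>i<n. (cmod (vc $ i))^2)"
  have s1: "s = z * complex_of_real N"
  proof -
    have "s = (\<Sum>i<n. z * (cnj (vc $ i) * vc $ i))" unfolding s_def
      by (rule sum.cong, auto simp: entry)
    also have "\<dots> = z * (\<Sum>i<n. complex_of_real ((cmod (vc $ i))^2))"
    proof -
      have cc: "cnj x * x = complex_of_real ((cmod x)^2)" for x
        using complex_norm_square[of x] by (simp add: mult.commute)
      show ?thesis by (simp add: sum_distrib_left cc)
    qed
    finally show ?thesis unfolding N_def by simp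
  qed
  have s2: "cnj s = s"
  proof -
    have "cnj s = (\<Sum>i<n. \<Sum>j<n. vc $ i * complex_of_real (A $$ (i,j)) * cnj (vc $ j))"
      unfolding s_def by (simp add: sum_distrib_left mult_ac)
    also have "\<dots> = (\<Sum>j<n. \<Sum>i<n. vc $ i * complex_of_real (A $$ (i,j)) * cnj (vc $ j))"
      by (rule sum.swap)
    also have "\<dots> = s" unfolding s_def sum_distrib_left
      by (rule sum.cong[OF refl], rule sum.cong[OF refl], auto simp: sym mult_ac)
    finally show ?thesis .
  qed
  have Npos: "N > 0"
  proof -
    obtain i where i: "i < n" "vc $ i \<noteq> 0" using vc vc0 by (metis carrier_vecD eq_vecI index_zero_vec(1,2))
    have "(cmod (vc $ i))^2 \<le> N" unfolding N_def
      by (rule member_le_sum, insert i, auto)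
    moreover have "(cmod (vc $ i))^2 > 0" using i by simp
    ultimately show ?thesis by linarith
  qed
  have "cnj z * complex_of_real N = z * complex_of_real N" using s1 s2
    by (metis complex_cnj_complex_of_real complex_cnj_mult)
  hence zr: "cnj z = z" using Npos by simp
  hence imz: "Im z = 0" proof - have "Im (cnj z) = Im z" using zr by (rule arg_cong) thus ?thesis by simp qed
  define vr where "vr = vec n (\<lambda>i. Re (vc $ i))"
  define vi where "vi = vec n (\<lambda>i. Im (vc $ i))"
  have mr: "A *\<^sub>v vr = Re z \<cdot>\<^sub>v vr"
  proof (rule eq_vecI)
    fix i assume "i < dim_vec (Re z \<cdot>\<^sub>v vr)"
    hence i: "i < n" by (simp add: vr_def)
    have "Re (\<Sum>j<n. complex_of_real (A $$ (i,j)) * vc $ j) = Re (z * vc $ i)" using entry[OF i] by simp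
    thus "(A *\<^sub>v vr) $ i = (Re z \<cdot>\<^sub>v vr) $ i" using i A imz
      by (simp add: vr_def scalar_prod_def atLeast0LessThan Re_sum)
  qed (insert A, simp add: vr_def)
  have mi: "A *\<^sub>v vi = Re z \<cdot>\<^sub>v vi"
  proof (rule eq_vecI)
    fix i assume "i < dim_vec (Re z \<cdot>\<^sub>v vi)"
    hence i: "i < n" by (simp add: vi_def)
    have "Im (\<Sum>j<n. complex_of_real (A $$ (i,j)) * vc $ j) = Im (z * vc $ i)" using entry[OF i] by simp
    thus "(A *\<^sub>v vi) $ i = (Re z \<cdot>\<^sub>v vi) $ i" using i A imz
      by (simp add: vi_def scalar_prod_def atLeast0LessThan Im_sum)
  qed (insert A, simp add: vi_def)
  have "vr \<noteq> 0\<^sub>v n \<or> vi \<noteq> 0\<^sub>v n"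
  proof (rule ccontr)
    assume "\<not> ?thesis"
    hence "\<And>i. i < n \<Longrightarrow> Re (vc $ i) = 0 \<and> Im (vc $ i) = 0"
      unfolding vr_def vi_def by (metis index_vec index_zero_vec(1))
    hence "vc = 0\<^sub>v n" using vc by (intro eq_vecI, auto simp: complex.expand)
    thus False using vc0 by simp
  qed
  moreover have "vr \<in> carrier_vec n" "vi \<in> carrier_vec n" by (auto simp: vr_def vi_def)
  ultimately show ?thesis using mr mi by blast
qed

lemma real_cscalar[simp]: "(v :: real vec) \<bullet>c w = v \<bullet> w"
proof -
  have "conjugate w = w" by (intro eq_vecI, auto)
  thus ?thesis by simp
qed

lemma orthonormal_completion:
  fixes v :: "real vec"
  assumes v: "v \<in> carrier_vec n" and v1: "v \<bullet> v = 1"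
  shows "\<exists>W. W \<in> carrier_mat n n \<and> transpose_mat W * W = 1\<^sub>m n \<and> W * transpose_mat W = 1\<^sub>m n \<and> col W 0 = v"
proof -
  interpret cof_vec_space n "TYPE(real)" .
  have v0: "v \<noteq> 0\<^sub>v n" using v1 v by auto
  define b where "b = basis_completion v"
  define ws where "ws = gram_schmidt n b"
  from basis_completion[OF v v0, folded b_def]
  have dist_b: "distinct b" 
    and indep: "\<not> lin_dep (set b)" and b: "set b \<subseteq> carrier_vec n" and hdb: "hd b = v" 
    and len_b: "length b = n" by auto
  have n: "n > 0" using v0 v by (metis carrier_vecD neq0_conv vec_of_dim_0)
  from hdb len_b n obtain vs where bv: "b = v # vs" by (cases b, auto)
  from gram_schmidt_result[OF b dist_b indep refl, folded ws_def]
  have ws: "set ws \<subseteq> carrier_vec n" "corthogonal ws" "length ws = n" 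
    by (auto simp: len_b)
  from gram_schmidt_hd[OF v, of vs, folded bv] have hdws: "hd ws = v" unfolding ws_def .
  define us where "us = map (\<lambda>w. (1 / sqrt (w \<bullet> w)) \<cdot>\<^sub>v w) ws"
  have lus: "length us = n" using ws by (simp add: us_def)
  have usc: "set us \<subseteq> carrier_vec n" using ws by (auto simp: us_def)
  have wsc: "i < n \<Longrightarrow> ws ! i \<in> carrier_vec n" for i using ws by auto
  have pos: "i < n \<Longrightarrow> ws ! i \<bullet> ws ! i > 0" for i
  proof -
    assume i: "i < n"
    have "ws ! i \<bullet> ws ! i \<noteq> 0" using corthogonalD[OF ws(2), of i i] i ws by auto
    moreover have "ws ! i \<bullet> ws ! i \<ge> 0" using conjugate_square_ge_0_vec[of "ws ! i"] by simp
    ultimately show ?thesis by simp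
  qed
  have ortho: "us ! i \<bullet> us ! j = (if i = j then 1 else 0)" if i: "i < n" and j: "j < n" for i j
  proof -
    have "us ! i \<bullet> us ! j = (1 / sqrt (ws!i \<bullet> ws!i)) * (1 / sqrt (ws!j \<bullet> ws!j)) * (ws ! i \<bullet> ws ! j)"
      using i j ws wsc[OF i] wsc[OF j] by (simp add: us_def)
    also have "\<dots> = (if i = j then 1 else 0)"
    proof (cases "i = j")
      case True
      have "sqrt (ws!i \<bullet> ws!i) * sqrt (ws!i \<bullet> ws!i) = ws!i \<bullet> ws!i" using pos[OF i] by simp
      then show ?thesis using True pos[OF i] by (simp add: field_simps)
    next
      case False
      have "ws ! i \<bullet> ws ! j = 0" using corthogonalD[OF ws(2), of i j] i j ws False by auto
      then show ?thesis using False by simp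
    qed
    finally show ?thesis .
  qed
  define W where "W = mat_of_cols n us"
  have W: "W \<in> carrier_mat n n" unfolding W_def using lus mat_of_cols_carrier(1)[of n us] by simp
  have colW: "i < n \<Longrightarrow> col W i = us ! i" for i unfolding W_def using lus usc by (intro col_mat_of_cols, auto)
  have WTW: "transpose_mat W * W = 1\<^sub>m n"
    by (rule eq_matI, insert W, auto simp: colW ortho)
  have WWT: "W * transpose_mat W = 1\<^sub>m n"
    by (rule mat_mult_left_right_inverse[OF _ W WTW], insert W, simp)
  have "ws ! 0 = v" using hdws n ws by (metis hd_conv_nth list.size(3) not_less0)
  hence "us ! 0 = (1 / sqrt (v \<bullet> v)) \<cdot>\<^sub>v v" using n ws unfolding us_def by simp
  hence "col W 0 = v" using colW[OF n] v1 by simp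
  thus ?thesis using W WTW WWT by blast
qed

lemma spectral:
  fixes A :: "real mat"
  assumes "A \<in> carrier_mat n n" and "transpose_mat A = A"
  shows "\<exists>P D. P \<in> carrier_mat n n \<and> D \<in> carrier_mat n n \<and> diagonal_mat D \<and>
     transpose_mat P * P = 1\<^sub>m n \<and> P * transpose_mat P = 1\<^sub>m n \<and> A = P * D * transpose_mat P"
  using assms
proof (induction n arbitrary: A)
  case 0
  show ?case
    by (rule exI[of _ "1\<^sub>m 0"], rule exI[of _ A], insert 0, auto simp: diagonal_mat_def)
next
  case (Suc m)
  note A = Suc.prems(1)
  have sym: "i < Suc m \<Longrightarrow> j < Suc m \<Longrightarrow> A $$ (i,j) = A $$ (j,i)" for i j
    using Suc.prems by (metis carrier_matD(1,2) index_transpose_mat(1))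
  obtain \<mu> v where v: "v \<in> carrier_vec (Suc m)" "v \<noteq> 0\<^sub>v (Suc m)" "A *\<^sub>v v = \<mu> \<cdot>\<^sub>v v"
    using real_sym_eigen[OF A _ sym] by auto
  have vv: "v \<bullet> v > 0"
  proof -
    have "v \<bullet> v \<noteq> 0" using v conjugate_square_eq_0_vec[of v] by auto
    moreover have "v \<bullet> v \<ge> 0" using conjugate_square_ge_0_vec[of v] by simp
    ultimately show ?thesis by simp
  qed
  define u where "u = (1 / sqrt (v \<bullet> v)) \<cdot>\<^sub>v v"
  have u: "u \<in> carrier_vec (Suc m)" using v by (simp add: u_def)
  have u1: "u \<bullet> u = 1" using v vv unfolding u_def
    by (simp add: field_simps)
  have Au: "A *\<^sub>v u = \<mu> \<cdot>\<^sub>v u" using v A unfolding u_def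
    by (simp add: mult_mat_vec smult_smult_assoc mult.commute)
  obtain W where W: "W \<in> carrier_mat (Suc m) (Suc m)" and WTW: "transpose_mat W * W = 1\<^sub>m (Suc m)"
    and WWT: "W * transpose_mat W = 1\<^sub>m (Suc m)" and W0: "col W 0 = u"
    using orthonormal_completion[OF u u1] by blast
  define A' where "A' = transpose_mat W * A * W"
  have A': "A' \<in> carrier_mat (Suc m) (Suc m)" using W A unfolding A'_def by auto
  have A'sym: "transpose_mat A' = A'"
  proof -
    have WA: "transpose_mat W * A \<in> carrier_mat (Suc m) (Suc m)" using W A by auto
    have "transpose_mat A' = transpose_mat W * transpose_mat (transpose_mat W * A)"
      unfolding A'_def by (rule transpose_mult[OF WA W])
    also have "transpose_mat (transpose_mat W * A) = transpose_mat A * W"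
      using transpose_mult[of "transpose_mat W" "Suc m" "Suc m" A "Suc m"] W A by simp
    finally show ?thesis unfolding A'_def using Suc.prems(2) W A
      by (simp add: assoc_mult_mat[of _ "Suc m" "Suc m" _ "Suc m" _ "Suc m"])
  qed
  have colA': "A' $$ (i,0) = (if i = 0 then \<mu> else 0)" if i: "i < Suc m" for i
  proof -
    have "A' $$ (i,0) = row (transpose_mat W) i \<bullet> col (A * W) 0"
      unfolding A'_def using W A i by (subst assoc_mult_mat[of _ "Suc m" "Suc m" _ "Suc m" _ "Suc m"], auto)
    also have "col (A * W) 0 = A *\<^sub>v col W 0" using A W by auto
    also have "\<dots> = \<mu> \<cdot>\<^sub>v u" using W0 Au by simp
    also have "row (transpose_mat W) i \<bullet> (\<mu> \<cdot>\<^sub>v u) = \<mu> * (col W i \<bullet> col W 0)"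
      using W i u W0 by auto
    also have "col W i \<bullet> col W 0 = (transpose_mat W * W) $$ (i,0)" using W i by auto
    finally show ?thesis using WTW i by auto
  qed
  have rowA': "A' $$ (0,j) = (if j = 0 then \<mu> else 0)" if j: "j < Suc m" for j
    using colA'[OF j] A'sym j A' by (metis carrier_matD(1,2) index_transpose_mat(1) zero_less_Suc)
  define A3 where "A3 = mat m m (\<lambda>(i,j). A' $$ (Suc i, Suc j))"
  have A3: "A3 \<in> carrier_mat m m" unfolding A3_def by auto
  have A3sym: "transpose_mat A3 = A3"
    unfolding A3_def using A'sym A'
    by (intro eq_matI, auto, metis Suc_less_eq carrier_matD(1,2) index_transpose_mat(1))
  obtain P' D' where P': "P' \<in> carrier_mat m m" and D': "D' \<in> carrier_mat m m" and dD': "diagonal_mat D'"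
    and P'TP': "transpose_mat P' * P' = 1\<^sub>m m" and P'P'T: "P' * transpose_mat P' = 1\<^sub>m m"
    and A3eq: "A3 = P' * D' * transpose_mat P'"
    using Suc.IH[OF A3 A3sym] by blast
  define M1 where "M1 = mat 1 1 (\<lambda>_. \<mu>)"
  have M1: "M1 \<in> carrier_mat 1 1" unfolding M1_def by auto
  have A'blk: "A' = four_block_mat M1 (0\<^sub>m 1 m) (0\<^sub>m m 1) A3"
  proof (rule eq_matI)
    fix i j assume i: "i < dim_row (four_block_mat M1 (0\<^sub>m 1 m) (0\<^sub>m m 1) A3)"
      and j: "j < dim_col (four_block_mat M1 (0\<^sub>m 1 m) (0\<^sub>m m 1) A3)"
    hence i': "i < Suc m" and j': "j < Suc m" using M1 A3 by auto
    show "A' $$ (i, j) = four_block_mat M1 (0\<^sub>m 1 m) (0\<^sub>m m 1) A3 $$ (i, j)"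
      using i' j' M1 A3 colA'[OF i'] rowA'[OF j']
      by (cases i; cases j; auto simp: M1_def A3_def)
  qed (insert A' M1 A3, auto)
  define B where "B = four_block_mat (1\<^sub>m 1) (0\<^sub>m 1 m) (0\<^sub>m m 1) P'"
  define D where "D = four_block_mat M1 (0\<^sub>m 1 m) (0\<^sub>m m 1) D'"
  have B: "B \<in> carrier_mat (Suc m) (Suc m)" unfolding B_def using P' by auto
  have D: "D \<in> carrier_mat (Suc m) (Suc m)" unfolding D_def using D' M1 by auto
  have BT: "transpose_mat B = four_block_mat (1\<^sub>m 1) (0\<^sub>m 1 m) (0\<^sub>m m 1) (transpose_mat P')"
    unfolding B_def using P' by (subst transpose_four_block_mat, auto)
  have BTB: "transpose_mat B * B = 1\<^sub>m (Suc m)"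
    unfolding BT unfolding B_def using P' P'TP'
    by (subst mult_four_block_mat[where ?nr1.0=1 and ?n1.0=1 and ?n2.0=m and ?nr2.0=m and ?nc1.0=1 and ?nc2.0=m], auto)
  have BBT: "B * transpose_mat B = 1\<^sub>m (Suc m)"
    unfolding BT unfolding B_def using P' P'P'T
    by (subst mult_four_block_mat[where ?nr1.0=1 and ?n1.0=1 and ?n2.0=m and ?nr2.0=m and ?nc1.0=1 and ?nc2.0=m], auto)
  have BDBT: "B * D * transpose_mat B = A'"
  proof -
    have "B * D = four_block_mat M1 (0\<^sub>m 1 m) (0\<^sub>m m 1) (P' * D')"
      unfolding B_def D_def using P' D' M1
      by (subst mult_four_block_mat[where ?nr1.0=1 and ?n1.0=1 and ?n2.0=m and ?nr2.0=m and ?nc1.0=1 and ?nc2.0=m], auto)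
    also have "\<dots> * transpose_mat B = four_block_mat M1 (0\<^sub>m 1 m) (0\<^sub>m m 1) (P' * D' * transpose_mat P')"
      unfolding BT using P' D' M1
      by (subst mult_four_block_mat[where ?nr1.0=1 and ?n1.0=1 and ?n2.0=m and ?nr2.0=m and ?nc1.0=1 and ?nc2.0=m], auto)
    finally show ?thesis using A'blk A3eq by simp
  qed
  have dD: "diagonal_mat D" unfolding D_def diagonal_mat_def using dD' D' M1
    by (auto simp: M1_def diagonal_mat_def)
  define P where "P = W * B"
  have P: "P \<in> carrier_mat (Suc m) (Suc m)" unfolding P_def using W B by auto
  have PT: "transpose_mat P = transpose_mat B * transpose_mat W"
    unfolding P_def using W B by (simp add: transpose_mult)
  have "transpose_mat P * P = transpose_mat B * (transpose_mat W * W) * B"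
    unfolding PT unfolding P_def using W B
    by (simp add: assoc_mult_mat[of _ "Suc m" "Suc m" _ "Suc m" _ "Suc m"])
  hence PTP: "transpose_mat P * P = 1\<^sub>m (Suc m)" using WTW BTB B by simp
  have "P * transpose_mat P = W * (B * transpose_mat B) * transpose_mat W"
    unfolding PT unfolding P_def using W B
    by (simp add: assoc_mult_mat[of _ "Suc m" "Suc m" _ "Suc m" _ "Suc m"])
  hence PPT: "P * transpose_mat P = 1\<^sub>m (Suc m)" using WWT BBT W by simp
  have "P * D * transpose_mat P = W * (B * D * transpose_mat B) * transpose_mat W"
    unfolding PT unfolding P_def using W B D
    by (simp add: assoc_mult_mat[of _ "Suc m" "Suc m" _ "Suc m" _ "Suc m"])
  also have "\<dots> = (W * transpose_mat W) * A * (W * transpose_mat W)"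
    unfolding BDBT A'_def using W A
    by (simp add: assoc_mult_mat[of _ "Suc m" "Suc m" _ "Suc m" _ "Suc m"])
  also have "\<dots> = A" using WWT A by simp
  finally show ?case using P D dD PTP PPT by metis
qed

lemma order_prod_lin: "Polynomial.order x (\<Prod>a\<leftarrow>ds. [:- a, 1:]) = count_list ds (x::real)"
proof (induction ds)
  case Nil
  then show ?case by (simp add: order_0I)
next
  case (Cons a ds)
  have nz: "(\<Prod>a\<leftarrow>ds. [:- a, 1:]) \<noteq> (0 :: real poly)"
    by (auto simp: prod_list_zero_iff)
  have "Polynomial.order x ([:- a, 1:] * (\<Prod>a\<leftarrow>ds. [:- a, 1:])) = Polynomial.order x [:- a, 1:] + Polynomial.order x (\<Prod>a\<leftarrow>ds. [:- a, 1:])"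
  proof (rule order_mult)
    have "[:- a, 1:] \<noteq> (0::real poly)" by simp
    thus "[:- a, 1:] * (\<Prod>a\<leftarrow>ds. [:- a, 1:]) \<noteq> 0" using nz by (metis mult_eq_0_iff)
  qed
  moreover have "Polynomial.order x [:- a, 1:] = (if a = x then 1 else 0)"
  proof (cases "a = x")
    case True
    then show ?thesis using order_power_n_n[of x 1] by simp
  next
    case False
    then show ?thesis by (simp add: order_0I)
  qed
  ultimately show ?case using Cons by simp
qed

lemma sum_count_list: "finite R \<Longrightarrow> (\<Sum>x\<in>R. count_list ds x) = length (filter (\<lambda>a. a \<in> R) ds)"
proof (induction ds)
  case Nil
  then show ?case by simp
next
  case (Cons a ds)
  have "(\<Sum>x\<in>R. count_list (a # ds) x) = (\<Sum>x\<in>R. count_list ds x) + (\<Sum>x\<in>R. if a = x then 1 else 0)"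
    by (subst sum.distrib[symmetric], rule sum.cong, auto)
  also have "(\<Sum>x\<in>R. if a = x then 1 else 0) = (if a \<in> R then 1 else (0::nat))"
    using Cons.prems by (simp add: sum.delta)
  finally show ?case using Cons by simp
qed

lemma neg_index_diag:
  fixes D :: "real mat"
  assumes A: "A \<in> carrier_mat n n" and D: "D \<in> carrier_mat n n" and dD: "diagonal_mat D"
    and P: "P \<in> carrier_mat n n" and PTP: "transpose_mat P * P = 1\<^sub>m n" and PPT: "P * transpose_mat P = 1\<^sub>m n"
    and eq: "A = P * D * transpose_mat P"
  shows "neg_index A = card {i. i < n \<and> D $$ (i,i) < 0}"
proof -
  have "similar_mat_wit A D P (transpose_mat P)"
    unfolding similar_mat_wit_def Let_def using A D P PTP PPT eq by auto
  hence "char_poly A = char_poly D" by (intro char_poly_similar, auto simp: similar_mat_def)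
  also have "char_poly D = (\<Prod>a\<leftarrow>diag_mat D. [:- a, 1:])"
    by (rule char_poly_upper_triangular[OF D], insert dD D, auto simp: upper_triangular_def diagonal_mat_def)
  finally have cp: "char_poly A = (\<Prod>a\<leftarrow>diag_mat D. [:- a, 1:])" .
  define ds where "ds = diag_mat D"
  have ds: "ds = map (\<lambda>i. D $$ (i,i)) [0..<n]" unfolding ds_def diag_mat_def using D by auto
  have roots: "poly (char_poly A) x = 0 \<longleftrightarrow> x \<in> set ds" for x
    unfolding cp ds_def[symmetric] by (induction ds, auto)
  define R where "R = {x. x < 0 \<and> poly (char_poly A) x = (0::real)}"
  have R: "R = {x. x < 0 \<and> x \<in> set ds}" unfolding R_def roots by simp
  have fR: "finite R" unfolding R by auto
  have "neg_index A = (\<Sum>x\<in>R. Polynomial.order x (char_poly A))"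
    unfolding neg_index_def R_def ..
  also have "\<dots> = (\<Sum>x\<in>R. count_list ds x)"
    unfolding cp ds_def[symmetric] order_prod_lin ..
  also have "\<dots> = length (filter (\<lambda>a. a \<in> R) ds)" by (rule sum_count_list[OF fR])
  also have "filter (\<lambda>a. a \<in> R) ds = filter (\<lambda>a. a < 0) ds" unfolding R by (rule filter_cong, auto)
  also have "length (filter (\<lambda>a. a < 0) ds) = card {i. i < n \<and> D $$ (i,i) < 0}"
    unfolding ds by (simp add: length_filter_conv_card, rule arg_cong[where f=card], auto)
  finally show ?thesis .
qed

definition qwit :: "real mat \<Rightarrow> nat \<Rightarrow> nat \<Rightarrow> bool" where
  "qwit A n k \<longleftrightarrow> (\<exists>M. M \<in> carrier_mat n k \<and>
     (\<forall>c \<in> carrier_vec k. c \<noteq> 0\<^sub>v k \<longrightarrow> (M *\<^sub>v c) \<bullet> (A *\<^sub>v (M *\<^sub>v c)) < 0))"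

lemma qwit_congr:
  assumes A: "A \<in> carrier_mat n n" and S: "S \<in> carrier_mat n m"
    and w: "qwit (transpose_mat S * A * S) m k"
  shows "qwit A n k"
proof -
  obtain M where M: "M \<in> carrier_mat m k" and neg: "\<And>c. c \<in> carrier_vec k \<Longrightarrow> c \<noteq> 0\<^sub>v k \<Longrightarrow>
     (M *\<^sub>v c) \<bullet> ((transpose_mat S * A * S) *\<^sub>v (M *\<^sub>v c)) < 0"
    using w unfolding qwit_def by blast
  show ?thesis unfolding qwit_def
  proof (intro exI[of _ "S * M"] conjI ballI impI)
    show "S * M \<in> carrier_mat n k" using S M by auto
    fix c :: "real vec" assume c: "c \<in> carrier_vec k" and c0: "c \<noteq> 0\<^sub>v k"
    define y where "y = M *\<^sub>v c"
    have y: "y \<in> carrier_vec m" using M c unfolding y_def by auto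
    have SM: "(S * M) *\<^sub>v c = S *\<^sub>v y" unfolding y_def using S M c by auto
    have z: "A *\<^sub>v (S *\<^sub>v y) \<in> carrier_vec n" using A S y by auto
    have "(S *\<^sub>v y) \<bullet> (A *\<^sub>v (S *\<^sub>v y)) = (A *\<^sub>v (S *\<^sub>v y)) \<bullet> (S *\<^sub>v y)"
      by (rule comm_scalar_prod[OF _ z], insert S y, auto)
    also have "\<dots> = (transpose_mat S *\<^sub>v (A *\<^sub>v (S *\<^sub>v y))) \<bullet> y"
      by (rule transpose_vec_mult_scalar[OF S y z, symmetric])
    also have "\<dots> = y \<bullet> (transpose_mat S *\<^sub>v (A *\<^sub>v (S *\<^sub>v y)))"
      by (rule comm_scalar_prod[OF _ y], insert S A y, auto)
    also have "transpose_mat S *\<^sub>v (A *\<^sub>v (S *\<^sub>v y)) = (transpose_mat S * A * S) *\<^sub>v y"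
    proof -
      have "(transpose_mat S * A * S) *\<^sub>v y = (transpose_mat S * A) *\<^sub>v (S *\<^sub>v y)"
        by (rule assoc_mult_mat_vec[of _ m n _ m], insert S A y, auto)
      also have "\<dots> = transpose_mat S *\<^sub>v (A *\<^sub>v (S *\<^sub>v y))"
        by (rule assoc_mult_mat_vec[of _ m n _ n], insert S A y, auto)
      finally show ?thesis by simp
    qed
    finally show "(S * M *\<^sub>v c) \<bullet> (A *\<^sub>v (S * M *\<^sub>v c)) < 0"
      unfolding SM using neg[OF c c0] unfolding y_def by simp
  qed
qed

lemma quad_diag:
  fixes D :: "real mat"
  assumes D: "D \<in> carrier_mat n n" and dD: "diagonal_mat D" and x: "x \<in> carrier_vec n"
  shows "x \<bullet> (D *\<^sub>v x) = (\<Sum>i<n. D $$ (i,i) * (x $ i)^2)"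
proof -
  have Dx: "(D *\<^sub>v x) $ i = D $$ (i,i) * x $ i" if i: "i < n" for i
  proof -
    have "(D *\<^sub>v x) $ i = (\<Sum>j\<in>{0..<n}. D $$ (i,j) * x $ j)"
      using D x i by (simp add: scalar_prod_def)
    also have "\<dots> = (\<Sum>j\<in>{0..<n}. if j = i then D $$ (i,i) * x $ i else 0)"
      by (rule sum.cong, insert dD D i, auto simp: diagonal_mat_def)
    also have "\<dots> = D $$ (i,i) * x $ i" using i by simp
    finally show ?thesis .
  qed
  have "x \<bullet> (D *\<^sub>v x) = (\<Sum>i\<in>{0..<n}. x $ i * (D *\<^sub>v x) $ i)"
    using x D by (simp add: scalar_prod_def)
  also have "\<dots> = (\<Sum>i<n. D $$ (i,i) * (x $ i)^2)"
    by (simp add: atLeast0LessThan Dx power2_eq_square mult_ac)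
  finally show ?thesis .
qed

lemma det_zero_row:
  assumes A: "(A :: 'a :: comm_ring_1 mat) \<in> carrier_mat n n" and k: "k < n"
    and z: "\<And>j. j < n \<Longrightarrow> A $$ (k,j) = 0"
  shows "det A = 0"
proof -
  have "(\<Prod>i = 0..<n. A $$ (i, p i)) = 0" if p: "p permutes {0..<n}" for p
    by (rule prod_zero, insert k z p, auto intro!: bexI[of _ k] simp: permutes_in_image)
  thus ?thesis unfolding det_def using A by auto
qed

lemma qwit_diag:
  fixes D :: "real mat"
  assumes D: "D \<in> carrier_mat n n" and dD: "diagonal_mat D"
  shows "qwit D n k \<longleftrightarrow> k \<le> card {i. i < n \<and> D $$ (i,i) < 0}"
proof -
  define N where "N = {i. i < n \<and> D $$ (i,i) < 0}"
  define xs where "xs = sorted_list_of_set N"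
  have fN: "finite N" unfolding N_def by auto
  have xs: "distinct xs" "set xs = N" "length xs = card N"
    unfolding xs_def using fN by auto
  have xsn: "j < card N \<Longrightarrow> xs ! j < n \<and> D $$ (xs ! j, xs ! j) < 0" for j
    using xs nth_mem[of j xs] unfolding N_def by auto
  show ?thesis unfolding N_def[symmetric]
  proof
    assume w: "qwit D n k"
    show "k \<le> card N"
    proof (rule ccontr)
      assume "\<not> k \<le> card N"
      hence kp: "card N < k" by simp
      obtain M where M: "M \<in> carrier_mat n k" and neg: "\<And>c. c \<in> carrier_vec k \<Longrightarrow> c \<noteq> 0\<^sub>v k \<Longrightarrow>
          (M *\<^sub>v c) \<bullet> (D *\<^sub>v (M *\<^sub>v c)) < 0"
        using w unfolding qwit_def by blast
      define R where "R = mat k k (\<lambda>(a,l). if a < card N then M $$ (xs ! a, l) else 0)"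
      have R: "R \<in> carrier_mat k k" unfolding R_def by auto
      have "det R = 0"
        by (rule det_zero_row[OF R, of "k - 1"], insert kp, auto simp: R_def)
      then obtain c where c: "c \<in> carrier_vec k" "c \<noteq> 0\<^sub>v k" "R *\<^sub>v c = 0\<^sub>v k"
        using det_0_iff_vec_prod_zero_field[OF R] by blast
      define x where "x = M *\<^sub>v c"
      have x: "x \<in> carrier_vec n" unfolding x_def using M c by auto
      have x0: "x $ (xs ! a) = 0" if a: "a < card N" for a
      proof -
        have "(R *\<^sub>v c) $ a = 0" using c a kp by simp
        moreover have "(R *\<^sub>v c) $ a = x $ (xs ! a)"
          unfolding x_def R_def using a kp M c xsn[OF a]
          by (simp add: scalar_prod_def)
        ultimately show ?thesis by simp
      qed
      have "x \<bullet> (D *\<^sub>v x) = (\<Sum>i<n. D $$ (i,i) * (x $ i)^2)" by (rule quad_diag[OF D dD x])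
      also have "\<dots> \<ge> 0"
      proof (rule sum_nonneg)
        fix i assume i: "i \<in> {..<n}"
        show "0 \<le> D $$ (i,i) * (x $ i)^2"
        proof (cases "i \<in> N")
          case True
          then obtain a where "a < card N" "i = xs ! a" using xs by (metis in_set_conv_nth)
          then show ?thesis using x0 by simp
        next
          case False
          then show ?thesis using i unfolding N_def by auto
        qed
      qed
      finally show False using neg[OF c(1,2)] unfolding x_def by simp
    qed
  next
    assume kp: "k \<le> card N"
    define M where "M = mat n k (\<lambda>(i,j). if i = xs ! j then 1 else (0::real))"
    show "qwit D n k" unfolding qwit_def
    proof (intro exI[of _ M] conjI ballI impI)
      show "M \<in> carrier_mat n k" unfolding M_def by auto
      fix c :: "real vec" assume c: "c \<in> carrier_vec k" and c0: "c \<noteq> 0\<^sub>v k"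
      define x where "x = M *\<^sub>v c"
      have x: "x \<in> carrier_vec n" unfolding x_def M_def by (rule mult_mat_vec_carrier[of _ n k], auto simp: c)
      have injx: "inj_on (\<lambda>j. xs ! j) {..<k}"
        using xs kp by (auto simp: inj_on_def nth_eq_iff_index_eq)
      have xj: "x $ (xs ! j) = c $ j" if j: "j < k" for j
      proof -
        have "x $ (xs ! j) = (\<Sum>l\<in>{0..<k}. (if xs ! j = xs ! l then 1 else 0) * c $ l)"
          unfolding x_def M_def using xsn[of j] j kp c by (simp add: scalar_prod_def)
        also have "\<dots> = (\<Sum>l\<in>{0..<k}. if l = j then c $ j else 0)"
          by (rule sum.cong, insert xs kp j, auto simp: nth_eq_iff_index_eq)
        also have "\<dots> = c $ j" using j by simp
        finally show ?thesis .
      qed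
      have xo: "x $ i = 0" if i: "i < n" "i \<notin> (\<lambda>j. xs ! j) ` {..<k}" for i
        unfolding x_def M_def using i c by (auto simp: scalar_prod_def intro!: sum.neutral)
      have sub: "(\<lambda>j. xs ! j) ` {..<k} \<subseteq> {..<n}" using xsn kp by auto
      have "x \<bullet> (D *\<^sub>v x) = (\<Sum>i<n. D $$ (i,i) * (x $ i)^2)" by (rule quad_diag[OF D dD x])
      also have "\<dots> = (\<Sum>i\<in>(\<lambda>j. xs ! j) ` {..<k}. D $$ (i,i) * (x $ i)^2)"
        by (rule sum.mono_neutral_right, insert sub xo, auto)
      also have "\<dots> = (\<Sum>j<k. D $$ (xs ! j, xs ! j) * (c $ j)^2)"
        by (subst sum.reindex[OF injx], simp add: xj)
      also have "\<dots> < 0"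
      proof -
        obtain j0 where j0: "j0 < k" "c $ j0 \<noteq> 0" using c c0 by (metis carrier_vecD eq_vecI index_zero_vec(1,2))
        have neg: "j < k \<Longrightarrow> D $$ (xs ! j, xs ! j) < 0" for j using xsn kp by auto
        have "(\<Sum>j<k. D $$ (xs ! j, xs ! j) * (c $ j)^2) = D $$ (xs ! j0, xs ! j0) * (c $ j0)^2
           + (\<Sum>j\<in>{..<k} - {j0}. D $$ (xs ! j, xs ! j) * (c $ j)^2)"
          by (rule sum.remove, insert j0, auto)
        moreover have "(\<Sum>j\<in>{..<k} - {j0}. D $$ (xs ! j, xs ! j) * (c $ j)^2) \<le> 0"
        proof (rule sum_nonpos)
          fix j assume "j \<in> {..<k} - {j0}"
          hence "D $$ (xs ! j, xs ! j) \<le> 0" using neg by fastforce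
          thus "D $$ (xs ! j, xs ! j) * (c $ j)^2 \<le> 0" by (simp add: mult_nonpos_nonneg)
        qed
        moreover have "D $$ (xs ! j0, xs ! j0) * (c $ j0)^2 < 0"
          using neg[OF j0(1)] j0(2) by (simp add: mult_neg_pos)
        ultimately show ?thesis by linarith
      qed
      finally show "(M *\<^sub>v c) \<bullet> (D *\<^sub>v (M *\<^sub>v c)) < 0" unfolding x_def .
    qed
  qed
qed

lemma qwit_iff:
  fixes A :: "real mat"
  assumes A: "A \<in> carrier_mat n n" and sym: "transpose_mat A = A"
  shows "qwit A n k \<longleftrightarrow> k \<le> neg_index A"
proof -
  obtain P D where P: "P \<in> carrier_mat n n" and D: "D \<in> carrier_mat n n" and dD: "diagonal_mat D"
    and PTP: "transpose_mat P * P = 1\<^sub>m n" and PPT: "P * transpose_mat P = 1\<^sub>m n"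
    and eq: "A = P * D * transpose_mat P"
    using spectral[OF A sym] by blast
  have ni: "neg_index A = card {i. i < n \<and> D $$ (i,i) < 0}"
    by (rule neg_index_diag[OF A D dD P PTP PPT eq])
  have DA: "transpose_mat P * A * P = D"
  proof -
    have "transpose_mat P * A * P = (transpose_mat P * P) * D * (transpose_mat P * P)"
      unfolding eq using P D by (simp add: assoc_mult_mat[of _ n n _ n _ n])
    thus ?thesis using PTP D by simp
  qed
  have AD: "transpose_mat (transpose_mat P) * D * transpose_mat P = A" using eq by simp
  have "qwit A n k \<longleftrightarrow> qwit D n k"
  proof
    assume "qwit A n k"
    thus "qwit D n k" using qwit_congr[OF D, of "transpose_mat P" n k] P AD by simp
  next
    assume "qwit D n k"
    thus "qwit A n k" using qwit_congr[OF A P] DA by simp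
  qed
  thus ?thesis unfolding ni using qwit_diag[OF D dD] by simp
qed

definition wt :: "(nat \<Rightarrow> nat \<Rightarrow> bool) \<Rightarrow> (nat \<Rightarrow> nat \<Rightarrow> bool) \<Rightarrow> nat \<Rightarrow> nat \<Rightarrow> real" where
  "wt E \<sigma> u v = (if E u v then (if \<sigma> u v then 1 else -1) else 0)"

definition gQ :: "(nat \<Rightarrow> nat \<Rightarrow> bool) \<Rightarrow> (nat \<Rightarrow> nat \<Rightarrow> bool) \<Rightarrow> nat set \<Rightarrow> (nat \<Rightarrow> real) \<Rightarrow> real" where
  "gQ E \<sigma> V x = (\<Sum>u\<in>V. \<Sum>v\<in>V. wt E \<sigma> u v * x u * x v)"

definition gwit :: "(nat \<Rightarrow> nat \<Rightarrow> bool) \<Rightarrow> (nat \<Rightarrow> nat \<Rightarrow> bool) \<Rightarrow> nat set \<Rightarrow> nat \<Rightarrow> bool" where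
  "gwit E \<sigma> V k \<longleftrightarrow> (\<exists>F. \<forall>c. (\<exists>j<k. c j \<noteq> 0) \<longrightarrow> gQ E \<sigma> V (\<lambda>u. \<Sum>j<k. c j * F j u) < 0)"

fun lpos :: "nat list \<Rightarrow> nat \<Rightarrow> nat" where
  "lpos [] u = 0"
| "lpos (y # ys) u = (if y = u then 0 else Suc (lpos ys u))"

lemma lpos_nth: "distinct xs \<Longrightarrow> i < length xs \<Longrightarrow> lpos xs (xs ! i) = i"
proof (induction xs arbitrary: i)
  case Nil
  then show ?case by simp
next
  case (Cons y ys)
  then show ?case by (cases i, auto)
qed

lemma sum_sorted_list:
  assumes "finite V"
  shows "(\<Sum>u\<in>V. f u) = (\<Sum>i<card V. f (sorted_list_of_set V ! i))"
proof -
  define sl where "sl = sorted_list_of_set V"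
  have sl: "distinct sl" "set sl = V" "length sl = card V" unfolding sl_def using assms by auto
  have inj: "inj_on (\<lambda>i. sl ! i) {..<card V}" using sl by (auto simp: inj_on_def nth_eq_iff_index_eq)
  have img: "(\<lambda>i. sl ! i) ` {..<card V} = V" using sl by (auto simp: in_set_conv_nth)
  show ?thesis unfolding sl_def[symmetric]
    by (subst img[symmetric], subst sum.reindex[OF inj], simp)
qed

lemma adj_quad:
  assumes fV: "finite V"
  shows "vec (card V) (\<lambda>i. x (sorted_list_of_set V ! i)) \<bullet>
     (adj_mat V E \<sigma> *\<^sub>v vec (card V) (\<lambda>i. x (sorted_list_of_set V ! i))) = gQ E \<sigma> V x"
proof -
  define sl where "sl = sorted_list_of_set V"
  define n where "n = card V"
  have "vec n (\<lambda>i. x (sl ! i)) \<bullet> (adj_mat V E \<sigma> *\<^sub>v vec n (\<lambda>i. x (sl ! i)))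
     = (\<Sum>i<n. x (sl ! i) * (\<Sum>j<n. wt E \<sigma> (sl ! i) (sl ! j) * x (sl ! j)))"
    unfolding adj_mat_def n_def[symmetric] sl_def[symmetric]
    by (simp add: scalar_prod_def atLeast0LessThan wt_def Let_def)
  also have "\<dots> = (\<Sum>i<n. \<Sum>j<n. wt E \<sigma> (sl ! i) (sl ! j) * x (sl ! i) * x (sl ! j))"
    by (simp add: sum_distrib_left mult_ac)
  also have "\<dots> = gQ E \<sigma> V x"
    unfolding gQ_def sum_sorted_list[OF fV] n_def sl_def ..
  finally show ?thesis unfolding n_def sl_def .
qed

lemma gwit_iff:
  assumes fV: "finite V" and sym: "\<And>u v. wt E \<sigma> u v = wt E \<sigma> v u"
  shows "gwit E \<sigma> V k \<longleftrightarrow> k \<le> i_minus V E \<sigma>"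
proof -
  define sl where "sl = sorted_list_of_set V"
  define n where "n = card V"
  define A where "A = adj_mat V E \<sigma>"
  have sl: "distinct sl" "set sl = V" "length sl = n" unfolding sl_def n_def using fV by auto
  have A: "A \<in> carrier_mat n n" unfolding A_def adj_mat_def n_def by auto
  have Aij: "i < n \<Longrightarrow> j < n \<Longrightarrow> A $$ (i,j) = wt E \<sigma> (sl ! i) (sl ! j)" for i j
    unfolding A_def adj_mat_def n_def sl_def wt_def by (simp add: Let_def)
  have Asym: "transpose_mat A = A"
    by (rule eq_matI, insert A, auto simp: Aij sym)
  have "gwit E \<sigma> V k \<longleftrightarrow> qwit A n k"
  proof
    assume "gwit E \<sigma> V k"
    then obtain F where F: "\<And>c. (\<exists>j<k. c j \<noteq> 0) \<Longrightarrow> gQ E \<sigma> V (\<lambda>u. \<Sum>j<k. c j * F j u) < 0"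
      unfolding gwit_def by blast
    define M where "M = mat n k (\<lambda>(i,j). F j (sl ! i))"
    show "qwit A n k" unfolding qwit_def
    proof (intro exI[of _ M] conjI ballI impI)
      show "M \<in> carrier_mat n k" unfolding M_def by auto
      fix c :: "real vec" assume c: "c \<in> carrier_vec k" and c0: "c \<noteq> 0\<^sub>v k"
      define x where "x = (\<lambda>u. \<Sum>j<k. c $ j * F j u)"
      have Mc: "M *\<^sub>v c = vec n (\<lambda>i. x (sl ! i))"
        unfolding M_def x_def using c by (intro eq_vecI, auto simp: scalar_prod_def atLeast0LessThan mult_ac)
      have "\<exists>j<k. c $ j \<noteq> 0" using c c0 by (metis carrier_vecD eq_vecI index_zero_vec(1,2))
      hence "gQ E \<sigma> V x < 0" unfolding x_def using F[of "\<lambda>j. c $ j"] by simp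
      thus "(M *\<^sub>v c) \<bullet> (A *\<^sub>v (M *\<^sub>v c)) < 0"
        unfolding Mc A_def using adj_quad[OF fV, of x E \<sigma>] unfolding sl_def n_def by simp
    qed
  next
    assume "qwit A n k"
    then obtain M where M: "M \<in> carrier_mat n k" and neg: "\<And>c. c \<in> carrier_vec k \<Longrightarrow> c \<noteq> 0\<^sub>v k \<Longrightarrow>
         (M *\<^sub>v c) \<bullet> (A *\<^sub>v (M *\<^sub>v c)) < 0"
      unfolding qwit_def by blast
    define F where "F = (\<lambda>j u. M $$ (lpos sl u, j))"
    show "gwit E \<sigma> V k" unfolding gwit_def
    proof (intro exI[of _ F] allI impI)
      fix c :: "nat \<Rightarrow> real" assume cj: "\<exists>j<k. c j \<noteq> 0"
      define cv where "cv = vec k c"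
      have cv: "cv \<in> carrier_vec k" "cv \<noteq> 0\<^sub>v k" using cj unfolding cv_def by (auto simp: vec_eq_iff)
      define x where "x = (\<lambda>u. \<Sum>j<k. c j * F j u)"
      have Mc: "M *\<^sub>v cv = vec n (\<lambda>i. x (sl ! i))"
      proof (rule eq_vecI)
        fix i assume "i < dim_vec (vec n (\<lambda>i. x (sl ! i)))"
        hence i: "i < n" by simp
        have idx: "lpos sl (sl ! i) = i" using sl i by (simp add: lpos_nth)
        show "(M *\<^sub>v cv) $ i = vec n (\<lambda>i. x (sl ! i)) $ i"
          using M i unfolding cv_def x_def F_def
          by (auto simp: scalar_prod_def atLeast0LessThan mult_ac idx)
      qed (insert M, auto)
      have "(M *\<^sub>v cv) \<bullet> (A *\<^sub>v (M *\<^sub>v cv)) < 0" by (rule neg[OF cv])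
      thus "gQ E \<sigma> V (\<lambda>u. \<Sum>j<k. c j * F j u) < 0"
        unfolding Mc A_def x_def[symmetric] using adj_quad[OF fV, of x E \<sigma>] unfolding sl_def n_def by simp
    qed
  qed
  thus ?thesis using qwit_iff[OF A Asym] unfolding i_minus_def A_def by simp
qed

lemma gwit_subset:
  assumes fV: "finite V" and WV: "W \<subseteq> V" and w: "gwit E \<sigma> W k"
  shows "gwit E \<sigma> V k"
proof -
  obtain F where F: "\<And>c. (\<exists>j<k. c j \<noteq> 0) \<Longrightarrow> gQ E \<sigma> W (\<lambda>u. \<Sum>j<k. c j * F j u) < 0"
    using w unfolding gwit_def by blast
  define F' where "F' = (\<lambda>j u. if u \<in> W then F j u else 0)"
  show ?thesis unfolding gwit_def
  proof (intro exI[of _ F'] allI impI)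
    fix c :: "nat \<Rightarrow> real" assume cj: "\<exists>j<k. c j \<noteq> 0"
    define x where "x = (\<lambda>u. \<Sum>j<k. c j * F j u)"
    have x': "(\<lambda>u. \<Sum>j<k. c j * F' j u) = (\<lambda>u. if u \<in> W then x u else 0)"
      unfolding F'_def x_def by (auto intro!: ext)
    have fW: "finite W" using fV WV finite_subset by auto
    have "gQ E \<sigma> V (\<lambda>u. if u \<in> W then x u else 0) = (\<Sum>u\<in>W. \<Sum>v\<in>V. wt E \<sigma> u v * (if u \<in> W then x u else 0) * (if v \<in> W then x v else 0))"
      unfolding gQ_def by (rule sum.mono_neutral_right[OF fV WV], auto)
    also have "\<dots> = (\<Sum>u\<in>W. \<Sum>v\<in>W. wt E \<sigma> u v * (if u \<in> W then x u else 0) * (if v \<in> W then x v else 0))"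
      by (rule sum.cong[OF refl], rule sum.mono_neutral_right[OF fV WV], auto)
    also have "\<dots> = gQ E \<sigma> W x" unfolding gQ_def by (rule sum.cong[OF refl], rule sum.cong, auto)
    finally show "gQ E \<sigma> V (\<lambda>u. \<Sum>j<k. c j * F' j u) < 0" unfolding x' using F[OF cj] unfolding x_def by simp
  qed
qed

lemma gQ_insert2:
  assumes fS: "finite S" and aS: "a \<notin> S" and bS: "b \<notin> S" and ab: "a \<noteq> b"
    and naa: "\<not> E a a" and nbb: "\<not> E b b" and na: "\<And>u. u \<in> S \<Longrightarrow> \<not> E a u"
    and sym: "\<And>u v. wt E \<sigma> u v = wt E \<sigma> v u"
  shows "gQ E \<sigma> (insert a (insert b S)) x = gQ E \<sigma> S x + 2 * wt E \<sigma> a b * x a * x b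
     + 2 * x b * (\<Sum>u\<in>S. wt E \<sigma> b u * x u)"
proof -
  have wa: "u \<in> S \<Longrightarrow> wt E \<sigma> a u = 0" for u using na unfolding wt_def by auto
  have wa': "u \<in> S \<Longrightarrow> wt E \<sigma> u a = 0" for u using wa sym by metis
  have waa: "wt E \<sigma> a a = 0" "wt E \<sigma> b b = 0" using naa nbb unfolding wt_def by auto
  let ?W = "insert a (insert b S)"
  have fW: "finite (insert b S)" using fS by simp
  have aW: "a \<notin> insert b S" using aS ab by simp
  have inner: "(\<Sum>v\<in>?W. wt E \<sigma> u v * x u * x v) = wt E \<sigma> u a * x u * x a + wt E \<sigma> u b * x u * x b
      + (\<Sum>v\<in>S. wt E \<sigma> u v * x u * x v)" for u
    using fS aS bS ab by (simp add: sum.insert)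
  have "gQ E \<sigma> ?W x = (\<Sum>u\<in>?W. wt E \<sigma> u a * x u * x a + wt E \<sigma> u b * x u * x b
      + (\<Sum>v\<in>S. wt E \<sigma> u v * x u * x v))"
    unfolding gQ_def inner ..
  also have "\<dots> = (wt E \<sigma> a a * x a * x a + wt E \<sigma> a b * x a * x b + (\<Sum>v\<in>S. wt E \<sigma> a v * x a * x v))
     + (wt E \<sigma> b a * x b * x a + wt E \<sigma> b b * x b * x b + (\<Sum>v\<in>S. wt E \<sigma> b v * x b * x v))
     + (\<Sum>u\<in>S. wt E \<sigma> u a * x u * x a + wt E \<sigma> u b * x u * x b + (\<Sum>v\<in>S. wt E \<sigma> u v * x u * x v))"
    using fS aS bS ab by (simp add: sum.insert add.assoc)
  also have "(\<Sum>v\<in>S. wt E \<sigma> a v * x a * x v) = 0" using wa by simp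
  also have "(\<Sum>u\<in>S. wt E \<sigma> u a * x u * x a + wt E \<sigma> u b * x u * x b + (\<Sum>v\<in>S. wt E \<sigma> u v * x u * x v))
     = (\<Sum>u\<in>S. wt E \<sigma> b u * x u * x b) + gQ E \<sigma> S x"
    unfolding gQ_def sum.distrib[symmetric] by (rule sum.cong, auto simp: wa' sym[of _ b])
  finally show ?thesis using waa sym[of b a]
    by (simp add: sum_distrib_left sum_distrib_right algebra_simps)
qed

lemma gwit_pendant:
  assumes fS: "finite S" and aS: "a \<notin> S" and bS: "b \<notin> S" and ab: "a \<noteq> b" and Eab: "E a b"
    and naa: "\<not> E a a" and nbb: "\<not> E b b" and na: "\<And>u. u \<in> S \<Longrightarrow> \<not> E a u"
    and sym: "\<And>u v. wt E \<sigma> u v = wt E \<sigma> v u"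
    and w: "gwit E \<sigma> S k"
  shows "gwit E \<sigma> (insert a (insert b S)) (Suc k)"
proof -
  obtain F where F: "\<And>c. (\<exists>j<k. c j \<noteq> 0) \<Longrightarrow> gQ E \<sigma> S (\<lambda>u. \<Sum>j<k. c j * F j u) < 0"
    using w unfolding gwit_def by blast
  define s where "s = wt E \<sigma> a b"
  have ss: "s * s = 1" unfolding s_def wt_def using Eab by auto
  define L where "L = (\<lambda>y. \<Sum>u\<in>S. wt E \<sigma> b u * y u)"
  define F' where "F' = (\<lambda>j u. if u \<in> S then (if j < k then F j u else 0)
      else if u = b then (if j = k then 1 else 0)
      else if u = a then (if j < k then - s * L (F j) else - s) else 0)"
  show ?thesis unfolding gwit_def
  proof (intro exI[of _ F'] allI impI)
    fix c :: "nat \<Rightarrow> real" assume cj: "\<exists>j<Suc k. c j \<noteq> 0"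
    define y where "y = (\<lambda>u. \<Sum>j<k. c j * F j u)"
    define x where "x = (\<lambda>u. \<Sum>j<Suc k. c j * F' j u)"
    have xS: "u \<in> S \<Longrightarrow> x u = y u" for u unfolding x_def y_def F'_def by simp
    have xb: "x b = c k" unfolding x_def F'_def using bS ab by simp
    have Ly: "L y = (\<Sum>j<k. c j * L (F j))"
      unfolding L_def y_def by (simp add: sum_distrib_left sum_distrib_right mult_ac sum.swap[of _ S])
    have xa: "x a = - s * L y - s * c k" unfolding x_def F'_def Ly using aS ab
      by (simp add: sum_distrib_left sum_negf mult_ac)
    have LxLy: "L x = L y" unfolding L_def by (rule sum.cong, auto simp: xS)
    have QxQy: "gQ E \<sigma> S x = gQ E \<sigma> S y" unfolding gQ_def by (rule sum.cong, auto intro!: sum.cong simp: xS)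
    have "gQ E \<sigma> (insert a (insert b S)) x = gQ E \<sigma> S y + 2 * s * x a * x b + 2 * x b * L y"
    proof -
      have "gQ E \<sigma> (insert a (insert b S)) x = gQ E \<sigma> S x + 2 * s * x a * x b + 2 * x b * L x"
        unfolding s_def L_def by (rule gQ_insert2[where E=E and a=a and b=b and S=S and \<sigma>=\<sigma>], insert fS aS bS ab naa nbb na sym, auto)
      thus ?thesis unfolding LxLy QxQy .
    qed
    also have "\<dots> = gQ E \<sigma> S y - 2 * (c k)^2"
    proof -
      have sss: "s * (s * X) = X" for X using ss by (metis mult.assoc mult_1)
      show ?thesis unfolding xa xb by (simp add: algebra_simps power2_eq_square sss)
    qed
    also have "\<dots> < 0"
    proof (cases "\<exists>j<k. c j \<noteq> 0")
      case True
      have "gQ E \<sigma> S y < 0" using F[OF True] unfolding y_def .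
      moreover have "(c k)^2 \<ge> 0" by simp
      ultimately show ?thesis by linarith
    next
      case False
      hence y0: "y = (\<lambda>u. 0)" unfolding y_def by (auto intro!: ext)
      have "gQ E \<sigma> S y = 0" unfolding y0 gQ_def by simp
      moreover have "c k \<noteq> 0" using cj False less_Suc_eq by auto
      ultimately show ?thesis by simp
    qed
    finally show "gQ E \<sigma> (insert a (insert b S)) (\<lambda>u. \<Sum>j<Suc k. c j * F' j u) < 0"
      unfolding x_def .
  qed
qed

lemma chord_core:
  assumes sym: "\<And>u v. E u v \<Longrightarrow> E v u" and sc: "shortest_cycle E cs"
    and ij: "i < j" "j < length cs" and e: "E (cs ! i) (cs ! j)"
  shows "cycle_edge cs (cs ! i) (cs ! j)"
proof -
  define g where "g = length cs"
  have cyc: "is_cycle E cs" and short: "\<And>ds. is_cycle E ds \<Longrightarrow> g \<le> length ds"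
    using sc unfolding shortest_cycle_def g_def by auto
  have g3: "g \<ge> 3" and dist: "distinct cs" and edges: "\<And>t. t < g \<Longrightarrow> E (cs ! t) (cs ! ((t + 1) mod g))"
    using cyc unfolding is_cycle_def g_def by auto
  show ?thesis
  proof (cases "j = i + 1")
    case True
    then show ?thesis unfolding cycle_edge_def using ij
      by (intro exI[of _ i], auto)
  next
    case False
    show ?thesis
    proof (cases "i = 0 \<and> j = g - 1")
      case True
      have m: "(g - 1 + 1) mod g = 0" using g3 by simp
      have k: "g - 1 < g" using g3 by simp
      show ?thesis unfolding cycle_edge_def g_def[symmetric]
        by (rule exI[of _ "g - 1"], insert True k m, simp)
    next
      case False2: False
      define l where "l = j - i + 1"
      define ds where "ds = take l (drop i cs)"
      have l3: "l \<ge> 3" using ij False unfolding l_def by auto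
      have lg: "l < g" using ij False2 g3 unfolding l_def g_def by auto
      have lends: "length ds = l" unfolding ds_def l_def using ij by auto
      have dsn: "t < l \<Longrightarrow> ds ! t = cs ! (i + t)" for t unfolding ds_def l_def using ij by auto
      have "is_cycle E ds" unfolding is_cycle_def lends
      proof (intro conjI allI impI)
        show "3 \<le> l" by (rule l3)
        show "distinct ds" unfolding ds_def using dist by simp
        fix t assume t: "t < l"
        show "E (ds ! t) (ds ! ((t + 1) mod l))"
        proof (cases "t + 1 < l")
          case True
          have "E (cs ! (i + t)) (cs ! ((i + t + 1) mod g))" using edges[of "i + t"] t ij unfolding l_def g_def by auto
          moreover have "(i + t + 1) mod g = i + t + 1" using True ij unfolding l_def g_def by auto
          ultimately show ?thesis using True t by (simp add: dsn)
        next
          case False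
          hence "t = j - i" using t unfolding l_def by auto
          moreover have "(t + 1) mod l = 0"
          proof -
            have "t + 1 = l" using False t by auto
            thus ?thesis by simp
          qed
          ultimately show ?thesis using t dsn[of 0] dsn[of t] sym[OF e] ij l3 by auto
        qed
      qed
      hence "g \<le> l" using short lends by auto
      thus ?thesis using lg by simp
    qed
  qed
qed

lemma cycle_edge_sym: "cycle_edge cs u v \<Longrightarrow> cycle_edge cs v u"
  unfolding cycle_edge_def by blast

lemma chordless:
  assumes sym: "\<And>u v. E u v \<Longrightarrow> E v u" and irr: "\<And>u. \<not> E u u" and sc: "shortest_cycle E cs"
    and u: "u \<in> set cs" and v: "v \<in> set cs"
  shows "E u v \<longleftrightarrow> cycle_edge cs u v"
proof
  assume e: "E u v"
  obtain i j where i: "i < length cs" "u = cs ! i" and j: "j < length cs" "v = cs ! j"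
    using u v by (metis in_set_conv_nth)
  have "i \<noteq> j" using e i j irr by auto
  hence "i < j \<or> j < i" by auto
  thus "cycle_edge cs u v"
  proof
    assume "i < j"
    thus ?thesis using chord_core[OF sym sc _ j(1)] e i j by auto
  next
    assume "j < i"
    hence "cycle_edge cs v u" using chord_core[OF sym sc _ i(1)] sym[OF e] i j by auto
    thus ?thesis by (rule cycle_edge_sym)
  qed
next
  assume "cycle_edge cs u v"
  then obtain t where t: "t < length cs" and
    h: "(u = cs ! t \<and> v = cs ! ((t + 1) mod length cs)) \<or> (v = cs ! t \<and> u = cs ! ((t + 1) mod length cs))"
    unfolding cycle_edge_def by blast
  have "E (cs ! t) (cs ! ((t + 1) mod length cs))" using sc t unfolding shortest_cycle_def is_cycle_def by auto
  thus "E u v" using h sym by auto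
qed

lemma walk_take: "walk E xs \<Longrightarrow> 0 < m \<Longrightarrow> walk E (take m xs)"
  unfolding walk_def by auto

lemma walk_snoc: assumes w: "walk E ys" and e: "E (last ys) u" shows "walk E (ys @ [u])"
  unfolding walk_def
proof (intro conjI allI impI)
  show "ys @ [u] \<noteq> []" by simp
  fix i assume i: "Suc i < length (ys @ [u])"
  show "E ((ys @ [u]) ! i) ((ys @ [u]) ! Suc i)"
  proof (cases "Suc i < length ys")
    case True
    then show ?thesis using w unfolding walk_def by (simp add: nth_append)
  next
    case False
    hence "i = length ys - 1" "ys \<noteq> []" using i w unfolding walk_def by auto
    then show ?thesis using e False by (simp add: nth_append last_conv_nth)
  qed
qed

theorem lemma2p7:
  fixes V :: "nat set" and E \<sigma> :: "nat \<Rightarrow> nat \<Rightarrow> bool" and cs :: "nat list"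
  assumes "signed_graph V E \<sigma>"
    and "shortest_cycle E cs"
    and "i_minus V E \<sigma> = i_minus (set cs) (cycle_edge cs) \<sigma>"
  shows "\<forall>r::nat. r \<ge> 2 \<longrightarrow> N_r V E cs r = {}"
proof (intro allI impI)
  fix r :: nat assume r2: "r \<ge> 2"
  note sg = assms(1)[unfolded signed_graph_def]
  have fV: "finite V" and inV: "\<And>u v. E u v \<Longrightarrow> u \<in> V \<and> v \<in> V" and symE: "\<And>u v. E u v \<Longrightarrow> E v u"
    and irr: "\<And>u. \<not> E u u" and symS: "\<And>u v. E u v \<Longrightarrow> \<sigma> u v = \<sigma> v u"
    using sg by auto
  have sym: "wt E \<sigma> u v = wt E \<sigma> v u" for u v
  proof (cases "E u v")
    case True
    then show ?thesis unfolding wt_def using symE[OF True] symS[OF True] by simp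
  next
    case False
    hence "\<not> E v u" using symE by blast
    then show ?thesis unfolding wt_def using False by simp
  qed
  define S where "S = set cs"
  have fS: "finite S" unfolding S_def by simp
  have cyc: "is_cycle E cs" using assms(2) unfolding shortest_cycle_def by auto
  have SV: "S \<subseteq> V"
  proof
    fix u assume "u \<in> S"
    then obtain t where t: "t < length cs" "u = cs ! t" unfolding S_def by (metis in_set_conv_nth)
    have "E (cs ! t) (cs ! ((t + 1) mod length cs))" using cyc t unfolding is_cycle_def by auto
    thus "u \<in> V" using inV t by auto
  qed
  have adj_eq: "adj_mat S (cycle_edge cs) \<sigma> = adj_mat S E \<sigma>"
    unfolding adj_mat_def
  proof (rule eq_matI, simp_all)
    fix i j assume i: "i < card S" and j: "j < card S"
    have "sorted_list_of_set S ! i \<in> S" "sorted_list_of_set S ! j \<in> S"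
      using i j fS by (metis nth_mem length_sorted_list_of_set set_sorted_list_of_set)+
    hence "cycle_edge cs (sorted_list_of_set S ! i) (sorted_list_of_set S ! j) = E (sorted_list_of_set S ! i) (sorted_list_of_set S ! j)"
      using chordless[OF symE irr assms(2)] unfolding S_def by auto
    thus "(let u = sorted_list_of_set S ! i; v = sorted_list_of_set S ! j
          in if cycle_edge cs u v then if \<sigma> u v then 1 else - 1 else 0) =
         (let u = sorted_list_of_set S ! i; v = sorted_list_of_set S ! j
          in if E u v then if \<sigma> u v then 1 else - 1 else 0)" by (simp add: Let_def)
  qed
  define k0 where "k0 = i_minus S E \<sigma>"
  have hyp: "i_minus V E \<sigma> = k0" using assms(3) unfolding k0_def S_def[symmetric] i_minus_def adj_eq .
  show "N_r V E cs r = {}"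
  proof (rule ccontr)
    assume "N_r V E cs r \<noteq> {}"
    then obtain v0 where v0: "v0 \<in> V" "v0 \<notin> S" and d: "dist_to_set_eq E v0 S r"
      unfolding N_r_def S_def by auto
    from d obtain xs where xs: "walk E xs" "length xs = Suc r" "hd xs = v0" "last xs \<in> S"
      and nr: "\<And>k. k < r \<Longrightarrow> \<not> reach_in E k v0 S"
      unfolding dist_to_set_eq_def reach_in_def by blast
    define a where "a = xs ! (r - 2)"
    define b where "b = xs ! (r - 1)"
    have Eab: "E a b"
    proof -
      have e: "Suc (r - 2) = r - 1" using r2 by simp
      have "Suc (r - 2) < length xs" using xs(2) r2 by simp
      hence "E (xs ! (r - 2)) (xs ! Suc (r - 2))" using xs(1) unfolding walk_def by blast
      thus ?thesis unfolding a_def b_def e .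
    qed
    define ys where "ys = take (r - 1) xs"
    have ys: "walk E ys" "length ys = Suc (r - 2)" "hd ys = v0" "last ys = a"
    proof -
      show "walk E ys" unfolding ys_def by (rule walk_take[OF xs(1)], insert r2, simp)
      show "length ys = Suc (r - 2)" unfolding ys_def using xs(2) r2 by simp
      show "hd ys = v0" unfolding ys_def using xs r2 by (simp add: hd_take)
      have "ys \<noteq> []" "length ys = r - 1" unfolding ys_def using xs(2) r2 by auto
      hence "last ys = ys ! (r - 2)" using r2 by (simp add: last_conv_nth numeral_2_eq_2)
      also have "\<dots> = a" unfolding ys_def a_def using r2 by simp
      finally show "last ys = a" .
    qed
    have aS: "a \<notin> S"
    proof
      assume "a \<in> S"
      hence "reach_in E (r - 2) v0 S" unfolding reach_in_def using ys by metis
      thus False using nr[of "r - 2"] r2 by simp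
    qed
    have na: "\<not> E a u" if u: "u \<in> S" for u
    proof
      assume e: "E a u"
      have "walk E (ys @ [u])" by (rule walk_snoc[OF ys(1)], insert ys(4) e, simp)
      moreover have "length (ys @ [u]) = Suc (r - 1)" using ys(2) r2 by simp
      moreover have "hd (ys @ [u]) = v0" using ys(3) ys(2) by (cases ys, auto)
      ultimately have "reach_in E (r - 1) v0 S" unfolding reach_in_def using u by fastforce
      thus False using nr[of "r - 1"] r2 by simp
    qed
    have bS: "b \<notin> S" using na Eab by blast
    have ab: "a \<noteq> b" using Eab irr by auto
    have W: "insert a (insert b S) \<subseteq> V" using SV inV[OF Eab] by auto
    have "gwit E \<sigma> S k0" using gwit_iff[OF fS sym] unfolding k0_def by simp
    hence "gwit E \<sigma> (insert a (insert b S)) (Suc k0)"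
      by (intro gwit_pendant[where E=E and a=a and b=b and S=S and \<sigma>=\<sigma>], insert fS aS bS ab Eab irr na sym, auto)
    hence "gwit E \<sigma> V (Suc k0)" by (rule gwit_subset[OF fV W])
    hence "Suc k0 \<le> i_minus V E \<sigma>" using gwit_iff[OF fV sym] by simp
    thus False using hyp by simp
  qed
qed

end
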